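(* Let $K$ be a spherically complete valued field, $d\ge1$, and $C\subseteq K^d$ an $\mathcal{O}$-submodule. Then there exist a complete flag of $K$-linear subspaces $\{0\}\subsetneq F_1\subsetneq F_2\subsetneq\dots\subsetneq F_d=K^d$ (so $\dim F_i=i$) and nonempty upwards closed subsets $\Delta_1\supseteq\Delta_2\supseteq\dots\supseteq\Delta_d$ of $\Gamma\cup\{\infty\}$ such that $$C=\{v_1+\dots+v_d:\ v_i\in F_i,\ \nu_{K^d}(v_i)\in\Delta_i \text{ for all } i\}.$$
   Context: $K$ is a field with valuation $\nu:K\to\Gamma\cup\{\infty\}$ ($\Gamma$ an ordered abelian group, $\infty$ above all of $\Gamma$), valuation ring $\mathcal{O}=\{x:\nu(x)\ge0\}$. On $K^d$, $\nu_{K^d}(x_1,\dots,x_d)=\min_i\nu(x_i)$. A ball in $K$ is $\{x:\nu(x-c)\ge r\}$ or $\{x:\nu(x-c)>r\}$ ($c\in K$, $r\in\Gamma$); $K$ is spherically complete if every nested (totally ordered by inclusion) family of balls has nonempty intersection. A subset $\Delta\subseteq\Gamma\cup\{\infty\}$ is upwards closed if $\gamma\in\Delta$, $\delta\ge\gamma$ imply $\delta\in\Delta$. *)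

theory Defs
  imports "HOL-Analysis.Analysis"
begin

datatype 'g extv = Fin 'g | Infty

instantiation extv :: (linorder) linorder
begin
fun less_eq_extv :: "'a extv \<Rightarrow> 'a extv \<Rightarrow> bool" where
  "less_eq_extv _ Infty = True"
| "less_eq_extv Infty (Fin _) = False"
| "less_eq_extv (Fin a) (Fin b) = (a \<le> b)"
definition less_extv :: "'a extv \<Rightarrow> 'a extv \<Rightarrow> bool" where
  "less_extv x y = (x \<le> y \<and> \<not> y \<le> x)"
instance
proof
  fix x y z :: "'a extv"
  show "(x < y) = (x \<le> y \<and> \<not> y \<le> x)" by (simp add: less_extv_def)
  show "x \<le> x" by (cases x) auto
  show "x \<le> y \<Longrightarrow> y \<le> z \<Longrightarrow> x \<le> z" by (cases x; cases y; cases z) auto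
  show "x \<le> y \<Longrightarrow> y \<le> x \<Longrightarrow> x = y" by (cases x; cases y) auto
  show "x \<le> y \<or> y \<le> x" by (cases x; cases y) auto
qed
end

fun ext_add :: "'g::plus extv \<Rightarrow> 'g extv \<Rightarrow> 'g extv" where
  "ext_add (Fin a) (Fin b) = Fin (a + b)"
| "ext_add _ _ = Infty"

text \<open>A (Krull) valuation nu : K -> Gamma \<union> {infinity}, with value group Gamma
  (nu maps K^* onto Gamma).\<close>
definition valuation :: "('k::field \<Rightarrow> 'g::linordered_ab_group_add extv) \<Rightarrow> bool" where
  "valuation \<nu> \<longleftrightarrow>
     (\<forall>x. \<nu> x = Infty \<longleftrightarrow> x = 0) \<and>
     (\<forall>x y. \<nu> (x * y) = ext_add (\<nu> x) (\<nu> y)) \<and>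
     (\<forall>x y. min (\<nu> x) (\<nu> y) \<le> \<nu> (x + y)) \<and>
     (\<forall>\<gamma>. \<exists>x. \<nu> x = Fin \<gamma>)"

definition is_ball :: "('k::field \<Rightarrow> 'g::linorder extv) \<Rightarrow> 'k set \<Rightarrow> bool" where
  "is_ball \<nu> B \<longleftrightarrow> (\<exists>c r. B = {x. Fin r \<le> \<nu> (x - c)} \<or> B = {x. Fin r < \<nu> (x - c)})"

definition spherically_complete :: "('k::field \<Rightarrow> 'g::linorder extv) \<Rightarrow> bool" where
  "spherically_complete \<nu> \<longleftrightarrow>
     (\<forall>\<B>. (\<forall>B\<in>\<B>. is_ball \<nu> B) \<and> (\<forall>A\<in>\<B>. \<forall>B\<in>\<B>. A \<subseteq> B \<or> B \<subseteq> A)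
           \<longrightarrow> \<Inter>\<B> \<noteq> {})"

definition val_ring :: "('k::field \<Rightarrow> 'g::linordered_ab_group_add extv) \<Rightarrow> 'k set" where
  "val_ring \<nu> = {x. Fin 0 \<le> \<nu> x}"

definition vec_val :: "('k::field \<Rightarrow> 'g::linorder extv) \<Rightarrow> 'k ^ 'n \<Rightarrow> 'g extv" where
  "vec_val \<nu> v = Min (range (\<lambda>i. \<nu> (v $ i)))"

definition is_O_submodule :: "('k::field \<Rightarrow> 'g::linordered_ab_group_add extv) \<Rightarrow> ('k ^ 'n) set \<Rightarrow> bool" where
  "is_O_submodule \<nu> C \<longleftrightarrow> 0 \<in> C \<and> (\<forall>x\<in>C. \<forall>y\<in>C. x + y \<in> C) \<and>
     (\<forall>a\<in>val_ring \<nu>. \<forall>x\<in>C. a *s x \<in> C)"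

definition upwards_closed :: "'g::linorder extv set \<Rightarrow> bool" where
  "upwards_closed \<Delta> \<longleftrightarrow> (\<forall>\<gamma>\<in>\<Delta>. \<forall>\<delta>. \<gamma> \<le> \<delta> \<longrightarrow> \<delta> \<in> \<Delta>)"

end

theory Submission
  imports Defs
begin

lemma extv_le_Infty[simp]: "x \<le> Infty"
  by (cases x) auto
lemma Infty_le_iff[simp]: "Infty \<le> x \<longleftrightarrow> x = Infty"
  by (cases x) auto
lemma Fin_le_Fin[simp]: "Fin a \<le> Fin b \<longleftrightarrow> a \<le> b" by simp
lemma ext_add_Infty_iff: "ext_add (a::'g::linordered_ab_group_add extv) b = Infty \<longleftrightarrow> a = Infty \<or> b = Infty"
  by (cases a; cases b) auto
lemma ext_add_comm: "ext_add (a::'g::linordered_ab_group_add extv) b = ext_add b a"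
  by (cases a; cases b) (auto simp: add.commute)
lemma ext_add_mono: "a \<le> b \<Longrightarrow> ext_add (c::'g::linordered_ab_group_add extv) a \<le> ext_add c b"
  by (cases a; cases b; cases c) auto
lemma ext_add_Fin0[simp]: "ext_add (Fin 0) (a::'g::linordered_ab_group_add extv) = a" "ext_add (a::'g::linordered_ab_group_add extv) (Fin 0) = a"
  by (cases a; simp)+

definition kmod :: "('k::field \<Rightarrow> 'g::linordered_ab_group_add extv) \<Rightarrow> 'k set \<Rightarrow> bool" where
  "kmod \<nu> D \<longleftrightarrow> 0 \<in> D \<and> (\<forall>x\<in>D. \<forall>y\<in>D. x + y \<in> D) \<and> (\<forall>a x. Fin 0 \<le> \<nu> a \<longrightarrow> x \<in> D \<longrightarrow> a * x \<in> D)"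

locale vfield =
  fixes \<nu> :: "'k::field \<Rightarrow> 'g::linordered_ab_group_add extv"
  assumes valn: "valuation \<nu>"
begin

lemma nu_Infty_iff: "\<nu> x = Infty \<longleftrightarrow> x = 0" using valn unfolding valuation_def by blast
lemma nu_zero[simp]: "\<nu> 0 = Infty" using nu_Infty_iff by blast
lemma nu_mult: "\<nu> (x * y) = ext_add (\<nu> x) (\<nu> y)" using valn unfolding valuation_def by blast
lemma nu_add: "min (\<nu> x) (\<nu> y) \<le> \<nu> (x + y)" using valn unfolding valuation_def by blast
lemma nu_surj: "\<exists>x. \<nu> x = Fin g" using valn unfolding valuation_def by blast

lemma nu_one[simp]: "\<nu> 1 = Fin 0"
proof -
  have "\<nu> 1 \<noteq> Infty" using nu_Infty_iff by simp
  then obtain a where a: "\<nu> 1 = Fin a" by (cases "\<nu> 1") auto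
  have "Fin a = Fin (a + a)" using nu_mult[of 1 1] a by simp
  hence "a + a = a" by simp
  hence "a = 0" by (metis add_cancel_right_right)
  then show ?thesis using a by simp
qed

lemma nu_neg1[simp]: "\<nu> (-1) = Fin 0"
proof -
  have "\<nu> (-1) \<noteq> Infty" using nu_Infty_iff by simp
  then obtain a where a: "\<nu> (-1) = Fin a" by (cases "\<nu> (-1)") auto
  have "Fin 0 = Fin (a + a)" using nu_mult[of "-1" "-1"] a by simp
  hence "a + a = 0" by simp
  hence "a = 0" by (metis add_neg_neg add_pos_pos less_irrefl linorder_neqE)
  then show ?thesis using a by simp
qed

lemma nu_neg[simp]: "\<nu> (- x) = \<nu> x"
proof -
  have "- x = (-1) * x" by simp
  hence "\<nu> (- x) = ext_add (\<nu> (-1)) (\<nu> x)" by (metis nu_mult)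
  thus ?thesis by simp
qed

lemma nu_diff: "min (\<nu> x) (\<nu> y) \<le> \<nu> (x - y)"
  using nu_add[of x "-y"] by simp

lemma nu_inverse: "x \<noteq> 0 \<Longrightarrow> ext_add (\<nu> (inverse x)) (\<nu> x) = Fin 0"
  by (metis nu_mult left_inverse nu_one)

lemma nu_Fin: "x \<noteq> 0 \<Longrightarrow> \<exists>a. \<nu> x = Fin a"
  using nu_Infty_iff by (cases "\<nu> x") auto

lemma nu_div_integral:
  assumes "x \<noteq> 0" "\<nu> x \<le> \<nu> y"
  shows "Fin 0 \<le> \<nu> (y / x)"
proof (cases "y = 0")
  case True then show ?thesis by simp
next
  case False
  obtain a where a: "\<nu> x = Fin a" using nu_Fin assms(1) by blast
  obtain b where b: "\<nu> y = Fin b" using nu_Fin False by blast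
  have "y / x \<noteq> 0" using False assms(1) by simp
  then obtain c where c: "\<nu> (y/x) = Fin c" using nu_Fin by blast
  have "y = (y/x) * x" using assms(1) by simp
  hence "\<nu> y = ext_add (\<nu> (y/x)) (\<nu> x)" by (metis nu_mult)
  hence "b = c + a" using a b c by simp
  with assms(2) a b show ?thesis using c by simp
qed

lemma nu_mult_mono: "Fin 0 \<le> \<nu> a \<Longrightarrow> \<nu> x \<le> \<nu> (a * x)"
  unfolding nu_mult by (cases "\<nu> a"; cases "\<nu> x") auto


lemma val_ge_iff: "\<delta> \<le> vec_val \<nu> v \<longleftrightarrow> (\<forall>i. \<delta> \<le> \<nu> (v $ i))"
  unfolding vec_val_def by (subst Min_ge_iff) auto

lemma val_le: "vec_val \<nu> v \<le> \<nu> (v $ i)"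
  using val_ge_iff by blast

lemma val_attained: "\<exists>i. vec_val \<nu> v = \<nu> (v $ i)"
proof -
  have "Min (range (\<lambda>i. \<nu> (v $ i))) \<in> range (\<lambda>i. \<nu> (v $ i))"
    by (rule Min_in) auto
  then obtain i where "Min (range (\<lambda>i. \<nu> (v $ i))) = \<nu> (v $ i)" by blast
  thus ?thesis unfolding vec_val_def by blast
qed

lemma val_zero[simp]: "vec_val \<nu> 0 = Infty"
  using val_ge_iff[of Infty "0::'k^'n"] by (simp add: antisym)

lemma val_Infty_iff: "vec_val \<nu> v = Infty \<longleftrightarrow> v = 0"
proof
  assume "vec_val \<nu> v = Infty"
  hence "\<forall>i. Infty \<le> \<nu> (v $ i)" using val_ge_iff by (metis order_refl)
  hence "\<forall>i. v $ i = 0" using nu_Infty_iff by simp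
  thus "v = 0" by (simp add: vec_eq_iff)
qed simp

lemma val_add: "min (vec_val \<nu> x) (vec_val \<nu> y) \<le> vec_val \<nu> (x + y)"
proof -
  have "\<forall>i. min (vec_val \<nu> x) (vec_val \<nu> y) \<le> \<nu> ((x + y) $ i)"
  proof
    fix i
    have "min (vec_val \<nu> x) (vec_val \<nu> y) \<le> min (\<nu> (x$i)) (\<nu> (y$i))"
      using val_le by (meson min.mono)
    also have "\<dots> \<le> \<nu> ((x + y) $ i)" using nu_add by simp
    finally show "min (vec_val \<nu> x) (vec_val \<nu> y) \<le> \<nu> ((x + y) $ i)" .
  qed
  thus ?thesis using val_ge_iff by blast
qed

lemma val_neg[simp]: "vec_val \<nu> (- x) = vec_val \<nu> x"
  unfolding vec_val_def by simp

lemma val_diff: "min (vec_val \<nu> x) (vec_val \<nu> y) \<le> vec_val \<nu> (x - y)"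
  using val_add[of x "-y"] by simp

lemma val_scale: "vec_val \<nu> (c *s v) = ext_add (\<nu> c) (vec_val \<nu> v)"
proof (rule antisym)
  obtain p where p: "vec_val \<nu> v = \<nu> (v $ p)" using val_attained by blast
  show "vec_val \<nu> (c *s v) \<le> ext_add (\<nu> c) (vec_val \<nu> v)"
    using val_le[of "c *s v" p] p by (simp add: nu_mult)
  show "ext_add (\<nu> c) (vec_val \<nu> v) \<le> vec_val \<nu> (c *s v)"
    unfolding val_ge_iff by (simp add: nu_mult ext_add_mono val_le)
qed

lemma om_zero: "is_O_submodule \<nu> C \<Longrightarrow> 0 \<in> C"
  unfolding is_O_submodule_def by blast
lemma om_add: "is_O_submodule \<nu> C \<Longrightarrow> x \<in> C \<Longrightarrow> y \<in> C \<Longrightarrow> x + y \<in> C"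
  unfolding is_O_submodule_def by blast
lemma om_scale: "is_O_submodule \<nu> C \<Longrightarrow> Fin 0 \<le> \<nu> a \<Longrightarrow> x \<in> C \<Longrightarrow> a *s x \<in> C"
  unfolding is_O_submodule_def val_ring_def by blast
lemma om_neg: "is_O_submodule \<nu> C \<Longrightarrow> x \<in> C \<Longrightarrow> - x \<in> C"
  using om_scale[of C "-1" x] by simp
lemma om_diff: assumes "is_O_submodule \<nu> C" "x \<in> C" "y \<in> C" shows "x - y \<in> C"
  using om_add[OF assms(1,2) om_neg[OF assms(1,3)]] by simp
lemma om_sum: "is_O_submodule \<nu> C \<Longrightarrow> (\<And>i. i \<in> A \<Longrightarrow> f i \<in> C) \<Longrightarrow> sum f A \<in> C"
  by (induction A rule: infinite_finite_induct) (auto intro: om_zero om_add)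
lemma om_comb: "is_O_submodule \<nu> C \<Longrightarrow> Fin 0 \<le> \<nu> r \<Longrightarrow> x \<in> C \<Longrightarrow> y \<in> C \<Longrightarrow> r *s x - y \<in> C"
  by (intro om_diff om_scale)

lemma kmod_zero: "kmod \<nu> D \<Longrightarrow> 0 \<in> D" unfolding kmod_def by blast
lemma kmod_add: "kmod \<nu> D \<Longrightarrow> x \<in> D \<Longrightarrow> y \<in> D \<Longrightarrow> x + y \<in> D" unfolding kmod_def by blast
lemma kmod_mult: "kmod \<nu> D \<Longrightarrow> Fin 0 \<le> \<nu> a \<Longrightarrow> x \<in> D \<Longrightarrow> a * x \<in> D" unfolding kmod_def by blast
lemma kmod_neg: "kmod \<nu> D \<Longrightarrow> x \<in> D \<Longrightarrow> - x \<in> D"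
  using kmod_mult[of D "-1" x] by simp
lemma kmod_diff: assumes "kmod \<nu> D" "x \<in> D" "y \<in> D" shows "x - y \<in> D"
  using kmod_add[OF assms(1,2) kmod_neg[OF assms(1,3)]] by simp

lemma kmod_up: assumes "kmod \<nu> D" "x \<in> D" "\<nu> x \<le> \<nu> y" shows "y \<in> D"
proof (cases "x = 0")
  case True
  then have "y = 0" using assms(3) nu_Infty_iff by simp
  then show ?thesis using kmod_zero assms(1) by simp
next
  case False
  have "(y / x) * x \<in> D" using kmod_mult[OF assms(1) nu_div_integral[OF False assms(3)] assms(2)] .
  thus ?thesis using False by simp
qed

lemma kmod_chain: assumes "kmod \<nu> D1" "kmod \<nu> D2" shows "D1 \<subseteq> D2 \<or> D2 \<subseteq> D1"
proof (rule ccontr)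
  assume "\<not> ?thesis"
  then obtain x y where "x \<in> D1" "x \<notin> D2" "y \<in> D2" "y \<notin> D1" by blast
  then show False using kmod_up[OF assms(1), of x y] kmod_up[OF assms(2), of y x]
    by (meson linear)
qed

lemma kmod_line: assumes "is_O_submodule \<nu> C" shows "kmod \<nu> {x. x *s w \<in> C}"
  unfolding kmod_def
proof (intro conjI ballI allI impI)
  show "0 \<in> {x. x *s w \<in> C}" using om_zero[OF assms] by simp
  fix x y assume "x \<in> {x. x *s w \<in> C}" "y \<in> {x. x *s w \<in> C}"
  thus "x + y \<in> {x. x *s w \<in> C}" using om_add[OF assms] by (simp add: vector_sadd_rdistrib)
next
  fix a x assume a: "Fin 0 \<le> \<nu> a" and x: "x \<in> {x. x *s w \<in> C}"
  have "a *s (x *s w) \<in> C" using om_scale[OF assms a] x by blast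
  thus "a * x \<in> {x. x *s w \<in> C}" by (simp add: vector_smult_assoc)
qed

end

context vfield begin

lemma nu_ultra3: "min (\<nu> (x - y)) (\<nu> (y - z)) \<le> \<nu> (x - z)"
  using nu_add[of "x - y" "y - z"] by simp

lemma cball_recenter:
  assumes "Fin r \<le> \<nu> (p - a)"
  shows "{t. Fin r \<le> \<nu> (t - a)} = {t. Fin r \<le> \<nu> (t - p)}"
proof -
  have pa: "Fin r \<le> \<nu> (a - p)" using assms nu_neg[of "p - a"] by simp
  show ?thesis
  proof (intro equalityI subsetI; simp)
    fix t assume "Fin r \<le> \<nu> (t - a)"
    thus "Fin r \<le> \<nu> (t - p)" using nu_ultra3[of t a p] pa by (meson min_le_iff_disj order_trans)
  next
    fix t assume "Fin r \<le> \<nu> (t - p)"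
    thus "Fin r \<le> \<nu> (t - a)" using nu_ultra3[of t p a] assms by (meson min_le_iff_disj order_trans)
  qed
qed

lemma cball_chain:
  assumes "p \<in> {t. Fin r1 \<le> \<nu> (t - a1)}" "p \<in> {t. Fin r2 \<le> \<nu> (t - a2)}"
  shows "{t. Fin r1 \<le> \<nu> (t - a1)} \<subseteq> {t. Fin r2 \<le> \<nu> (t - a2)} \<or>
         {t. Fin r2 \<le> \<nu> (t - a2)} \<subseteq> {t. Fin r1 \<le> \<nu> (t - a1)}"
proof -
  have e1: "{t. Fin r1 \<le> \<nu> (t - a1)} = {t. Fin r1 \<le> \<nu> (t - p)}"
    using cball_recenter assms(1) by simp
  have e2: "{t. Fin r2 \<le> \<nu> (t - a2)} = {t. Fin r2 \<le> \<nu> (t - p)}"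
    using cball_recenter assms(2) by simp
  show ?thesis unfolding e1 e2
  proof (cases "r1 \<le> r2")
    case True
    then show "{t. Fin r1 \<le> \<nu> (t - p)} \<subseteq> {t. Fin r2 \<le> \<nu> (t - p)} \<or>
      {t. Fin r2 \<le> \<nu> (t - p)} \<subseteq> {t. Fin r1 \<le> \<nu> (t - p)}"
      by (auto intro: order_trans)
  next
    case False
    then show "{t. Fin r1 \<le> \<nu> (t - p)} \<subseteq> {t. Fin r2 \<le> \<nu> (t - p)} \<or>
      {t. Fin r2 \<le> \<nu> (t - p)} \<subseteq> {t. Fin r1 \<le> \<nu> (t - p)}"
      by (auto intro: order_trans)
  qed
qed

definition gball :: "'k set \<Rightarrow> 'k \<Rightarrow> 'k \<Rightarrow> 'k set" where
  "gball D s c = {t. s + c * t \<in> D}"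

lemma gball_ne: assumes "kmod \<nu> D" "c \<noteq> 0" shows "- s / c \<in> gball D s c"
  using assms kmod_zero unfolding gball_def by simp

lemma gball_recenter:
  assumes D: "kmod \<nu> D" and a: "a \<in> gball D s c"
  shows "gball D s c = {t. c * (t - a) \<in> D}"
proof -
  have sa: "s + c * a \<in> D" using a unfolding gball_def by simp
  have eq: "\<And>t. s + c * t = (s + c * a) + c * (t - a)" by (simp add: algebra_simps)
  show ?thesis unfolding gball_def
  proof (intro equalityI subsetI; simp)
    fix t assume "s + c * t \<in> D"
    hence "(s + c * t) - (s + c * a) \<in> D" using kmod_diff[OF D _ sa] by blast
    thus "c * (t - a) \<in> D" by (simp add: algebra_simps)
  next
    fix t assume "c * (t - a) \<in> D"
    thus "s + c * t \<in> D" using kmod_add[OF D sa] eq by metis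
  qed
qed

lemma gball_interp:
  assumes D: "kmod \<nu> D" and c: "c \<noteq> 0" and c': "c' \<noteq> 0"
    and sub: "gball D s' c' \<subset> gball D s c"
  shows "\<exists>a r. gball D s' c' \<subseteq> {t. Fin r \<le> \<nu> (t - a)} \<and> {t. Fin r \<le> \<nu> (t - a)} \<subseteq> gball D s c"
proof -
  define a where "a = - s' / c'"
  have a': "a \<in> gball D s' c'" using gball_ne[OF D c'] a_def by simp
  hence a: "a \<in> gball D s c" using sub by blast
  have X: "gball D s c = {t. c * (t - a) \<in> D}" using gball_recenter[OF D a] .
  have X': "gball D s' c' = {t. c' * (t - a) \<in> D}" using gball_recenter[OF D a'] .
  obtain t0 where t0: "t0 \<in> gball D s c" "t0 \<notin> gball D s' c'" using sub by blast
  have "t0 \<noteq> a" using t0 a' by blast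
  then obtain r where r: "\<nu> (t0 - a) = Fin r" using nu_Fin by fastforce
  have c0: "c * (t0 - a) \<in> D" using t0 X by blast
  have c0': "c' * (t0 - a) \<notin> D" using t0 X' by blast
  show ?thesis
  proof (intro exI conjI subsetI)
    fix t assume "t \<in> {t. Fin r \<le> \<nu> (t - a)}"
    hence "\<nu> (c * (t0 - a)) \<le> \<nu> (c * (t - a))" using r by (simp add: nu_mult ext_add_mono)
    hence "c * (t - a) \<in> D" using kmod_up[OF D c0] by blast
    thus "t \<in> gball D s c" using X by blast
  next
    fix t assume t: "t \<in> gball D s' c'"
    hence ct: "c' * (t - a) \<in> D" using X' by blast
    show "t \<in> {t. Fin r \<le> \<nu> (t - a)}"
    proof (rule ccontr)
      assume "t \<notin> {t. Fin r \<le> \<nu> (t - a)}"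
      hence "\<nu> (t - a) \<le> \<nu> (t0 - a)" using r by auto
      hence "\<nu> (c' * (t - a)) \<le> \<nu> (c' * (t0 - a))" by (simp add: nu_mult ext_add_mono)
      hence "c' * (t0 - a) \<in> D" using kmod_up[OF D ct] by blast
      thus False using c0' by blast
    qed
  qed
qed

lemma gsc:
  assumes sc: "spherically_complete \<nu>" and D: "kmod \<nu> D"
    and G: "\<forall>X\<in>\<G>. \<exists>s c. c \<noteq> 0 \<and> X = gball D s c"
    and ch: "\<forall>X\<in>\<G>. \<forall>Y\<in>\<G>. X \<subseteq> Y \<or> Y \<subseteq> X"
  shows "\<exists>t. \<forall>X\<in>\<G>. t \<in> X"
proof (cases "\<exists>X0\<in>\<G>. \<forall>Y\<in>\<G>. X0 \<subseteq> Y")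
  case True
  then obtain X0 where X0: "X0 \<in> \<G>" "\<forall>Y\<in>\<G>. X0 \<subseteq> Y" by blast
  then obtain s c where "c \<noteq> 0" "X0 = gball D s c" using G by blast
  then have "- s / c \<in> X0" using gball_ne[OF D] by blast
  then show ?thesis using X0 by blast
next
  case False
  have ex: "\<exists>b. (\<exists>a r. b = {t. Fin r \<le> \<nu> (t - a)}) \<and> b \<subseteq> X \<and> (\<exists>Y\<in>\<G>. Y \<subseteq> b)" if X: "X \<in> \<G>" for X
  proof -
    obtain Y where Y: "Y \<in> \<G>" "\<not> X \<subseteq> Y" using False X by blast
    hence YX: "Y \<subset> X" using ch X by blast
    obtain s c where sc: "c \<noteq> 0" "X = gball D s c" using G X by blast
    obtain s' c' where sc': "c' \<noteq> 0" "Y = gball D s' c'" using G Y(1) by blast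
    obtain a r where "Y \<subseteq> {t. Fin r \<le> \<nu> (t - a)}" "{t. Fin r \<le> \<nu> (t - a)} \<subseteq> X"
      using gball_interp[OF D sc(1) sc'(1)] YX sc sc' by blast
    thus ?thesis using Y(1) by blast
  qed
  define \<beta> where "\<beta> X = (SOME b. (\<exists>a r. b = {t. Fin r \<le> \<nu> (t - a)}) \<and> b \<subseteq> X \<and> (\<exists>Y\<in>\<G>. Y \<subseteq> b))" for X
  have \<beta>: "(\<exists>a r. \<beta> X = {t. Fin r \<le> \<nu> (t - a)}) \<and> \<beta> X \<subseteq> X \<and> (\<exists>Y\<in>\<G>. Y \<subseteq> \<beta> X)" if "X \<in> \<G>" for X
    unfolding \<beta>_def using someI_ex[OF ex[OF that]] .
  have ne: "\<exists>p. p \<in> Y" if "Y \<in> \<G>" for Y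
    using G that gball_ne[OF D] by blast
  have balls: "\<forall>B\<in>\<beta> ` \<G>. is_ball \<nu> B"
    unfolding is_ball_def using \<beta> by blast
  have chain: "\<forall>A\<in>\<beta> ` \<G>. \<forall>B\<in>\<beta> ` \<G>. A \<subseteq> B \<or> B \<subseteq> A"
  proof (intro ballI)
    fix A B assume "A \<in> \<beta> ` \<G>" "B \<in> \<beta> ` \<G>"
    then obtain X1 X2 where X: "X1 \<in> \<G>" "X2 \<in> \<G>" "A = \<beta> X1" "B = \<beta> X2" by blast
    obtain a1 r1 where A: "A = {t. Fin r1 \<le> \<nu> (t - a1)}" using \<beta>[OF X(1)] X(3) by blast
    obtain a2 r2 where B: "B = {t. Fin r2 \<le> \<nu> (t - a2)}" using \<beta>[OF X(2)] X(4) by blast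
    obtain Y1 where Y1: "Y1 \<in> \<G>" "Y1 \<subseteq> A" using \<beta>[OF X(1)] X(3) by blast
    obtain Y2 where Y2: "Y2 \<in> \<G>" "Y2 \<subseteq> B" using \<beta>[OF X(2)] X(4) by blast
    have "\<exists>p. p \<in> A \<and> p \<in> B"
    proof (cases "Y1 \<subseteq> Y2")
      case True
      then show ?thesis using ne[OF Y1(1)] Y1 Y2 by blast
    next
      case False
      hence "Y2 \<subseteq> Y1" using ch Y1 Y2 by blast
      then show ?thesis using ne[OF Y2(1)] Y1 Y2 by blast
    qed
    then obtain p where "p \<in> A" "p \<in> B" by blast
    then show "A \<subseteq> B \<or> B \<subseteq> A" using cball_chain A B by blast
  qed
  have "\<Inter> (\<beta> ` \<G>) \<noteq> {}" using sc balls chain unfolding spherically_complete_def by blast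
  then obtain t where "t \<in> \<Inter> (\<beta> ` \<G>)" by blast
  then show ?thesis using \<beta> by blast
qed

end

lemma Lcomb: "(\<Sum>i<(k::nat). (r * x i - y i) *s (w i :: 'a::field^'n)) = r *s (\<Sum>i<k. x i *s w i) - (\<Sum>i<k. y i *s w i)"
  by (simp add: vector_sub_rdistrib vec.scale_sum_right sum_subtractf vector_smult_assoc)

lemma Lsupp1: assumes "j < (k::nat)" "\<forall>i<k. i \<noteq> j \<longrightarrow> x i = 0"
  shows "(\<Sum>i<k. x i *s (w i :: 'a::field^'n)) = x j *s w j"
proof -
  have "(\<Sum>i<k. x i *s w i) = (\<Sum>i\<in>{j}. x i *s w i)"
    using assms by (intro sum.mono_neutral_right) auto
  thus ?thesis by simp
qed

context vfield begin

lemma hb: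
  fixes w :: "nat \<Rightarrow> 'k^'n"
  assumes sc: "spherically_complete \<nu>" and CO: "is_O_submodule \<nu> C" and D: "kmod \<nu> D"
    and j: "j < k" and base: "\<forall>x. x *s w j \<in> C \<longrightarrow> x \<in> D"
    and fin: "finite J'" and J': "J' \<subseteq> {..<k}"
  shows "\<exists>a. a j = 1 \<and> (\<forall>l. (\<Sum>i<k. l i *s w i) \<in> C \<longrightarrow> (\<forall>i<k. i \<notin> insert j J' \<longrightarrow> l i = 0)
            \<longrightarrow> (\<Sum>i\<in>insert j J'. l i * a i) \<in> D)"
  using fin J'
proof (induction J' rule: finite_induct)
  case empty
  show ?case
  proof (intro exI[of _ "\<lambda>_. 1"] conjI allI impI)
    fix l assume L: "(\<Sum>i<k. l i *s w i) \<in> C" and z: "\<forall>i<k. i \<notin> insert j {} \<longrightarrow> l i = 0"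
    have "(\<Sum>i<k. l i *s w i) = l j *s w j" using Lsupp1[OF j] z by simp
    thus "(\<Sum>i\<in>insert j {}. l i * 1) \<in> D" using L base by simp
  qed simp
next
  case (insert m J)
  from insert.IH insert.prems obtain a where a1: "a j = 1"
    and IH: "\<And>l. (\<Sum>i<k. l i *s w i) \<in> C \<Longrightarrow> (\<forall>i<k. i \<notin> insert j J \<longrightarrow> l i = 0)
            \<Longrightarrow> (\<Sum>i\<in>insert j J. l i * a i) \<in> D" by auto
  show ?case
  proof (cases "m = j")
    case True
    then show ?thesis using a1 IH by (intro exI[of _ a]) (auto simp: insert_commute)
  next
    case mj: False
    have mJ: "m \<notin> insert j J" using mj insert.hyps by simp
    have mk: "m < k" using insert.prems by simp
    define S where "S l = (\<Sum>i\<in>insert j J. l i * a i)" for l :: "nat \<Rightarrow> 'k"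
    define P where "P l \<longleftrightarrow> (\<Sum>i<k. l i *s w i) \<in> C \<and> (\<forall>i<k. i \<notin> insert m (insert j J) \<longrightarrow> l i = 0) \<and> l m \<noteq> 0" for l
    define \<G> where "\<G> = {gball D (S l) (l m) | l. P l}"
    have key: "gball D (S l1) (l1 m) \<subseteq> gball D (S l2) (l2 m)"
      if P1: "P l1" and P2: "P l2" and le: "\<nu> (l1 m) \<le> \<nu> (l2 m)" for l1 l2
    proof
      define r where "r = l2 m / l1 m"
      have r0: "Fin 0 \<le> \<nu> r" unfolding r_def using nu_div_integral le P1 unfolding P_def by blast
      have rm: "r * l1 m = l2 m" unfolding r_def using P1 unfolding P_def by simp
      define \<mu> where "\<mu> i = r * l1 i - l2 i" for i
      have "(\<Sum>i<k. \<mu> i *s w i) = r *s (\<Sum>i<k. l1 i *s w i) - (\<Sum>i<k. l2 i *s w i)"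
        unfolding \<mu>_def by (rule Lcomb)
      hence muC: "(\<Sum>i<k. \<mu> i *s w i) \<in> C" using om_comb[OF CO r0] P1 P2 unfolding P_def by simp
      have musupp: "\<forall>i<k. i \<notin> insert j J \<longrightarrow> \<mu> i = 0"
      proof (intro allI impI)
        fix i assume "i < k" "i \<notin> insert j J"
        then show "\<mu> i = 0" using P1 P2 rm unfolding P_def \<mu>_def by (cases "i = m") auto
      qed
      have "S \<mu> \<in> D" using IH[OF muC musupp] unfolding S_def .
      moreover have "S \<mu> = r * S l1 - S l2"
        unfolding S_def \<mu>_def by (simp add: sum_distrib_left sum_subtractf algebra_simps)
      ultimately have d: "r * S l1 - S l2 \<in> D" by simp
      fix t assume "t \<in> gball D (S l1) (l1 m)"
      hence "r * (S l1 + l1 m * t) \<in> D" unfolding gball_def using kmod_mult[OF D r0] by blast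
      hence "r * (S l1 + l1 m * t) - (r * S l1 - S l2) \<in> D" using kmod_diff[OF D _ d] by blast
      moreover have "r * (S l1 + l1 m * t) - (r * S l1 - S l2) = S l2 + l2 m * t"
        using rm by (simp add: algebra_simps)
      ultimately show "t \<in> gball D (S l2) (l2 m)" unfolding gball_def by simp
    qed
    have Gform: "\<forall>X\<in>\<G>. \<exists>s c. c \<noteq> 0 \<and> X = gball D s c"
      unfolding \<G>_def P_def by blast
    have Gch: "\<forall>X\<in>\<G>. \<forall>Y\<in>\<G>. X \<subseteq> Y \<or> Y \<subseteq> X"
      unfolding \<G>_def using key by (smt (verit) linear mem_Collect_eq)
    obtain t where t: "\<forall>X\<in>\<G>. t \<in> X" using gsc[OF sc D Gform Gch] by blast
    show ?thesis
    proof (intro exI[of _ "a(m := t)"] conjI allI impI)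
      show "(a(m := t)) j = 1" using a1 mj by simp
      fix l assume L: "(\<Sum>i<k. l i *s w i) \<in> C"
        and z: "\<forall>i<k. i \<notin> insert j (insert m J) \<longrightarrow> l i = 0"
      have sum_eq: "(\<Sum>i\<in>insert j (insert m J). l i * (a(m := t)) i) = l m * t + S l"
      proof -
        have "insert j (insert m J) = insert m (insert j J)" by auto
        hence "(\<Sum>i\<in>insert j (insert m J). l i * (a(m := t)) i) = l m * t + (\<Sum>i\<in>insert j J. l i * (a(m := t)) i)"
          using mJ insert.hyps(1) by simp
        also have "(\<Sum>i\<in>insert j J. l i * (a(m := t)) i) = S l"
          unfolding S_def using mJ by (intro sum.cong) auto
        finally show ?thesis .
      qed
      show "(\<Sum>i\<in>insert j (insert m J). l i * (a(m := t)) i) \<in> D"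
      proof (cases "l m = 0")
        case True
        have "\<forall>i<k. i \<notin> insert j J \<longrightarrow> l i = 0" using z True by auto
        then show ?thesis using sum_eq True IH[OF L] unfolding S_def by simp
      next
        case False
        hence "P l" unfolding P_def using L z by auto
        hence "t \<in> gball D (S l) (l m)" using t unfolding \<G>_def by blast
        then show ?thesis using sum_eq unfolding gball_def by (simp add: add.commute)
      qed
    qed
  qed
qed

end

lemma Ldiff: "(\<Sum>i<(k::nat). (x i - y i) *s (w i :: 'a::field^'n)) = (\<Sum>i<k. x i *s w i) - (\<Sum>i<k. y i *s w i)"
  by (simp add: vector_sub_rdistrib sum_subtractf)

lemma Ladd: "(\<Sum>i<(k::nat). (x i + y i) *s (w i :: 'a::field^'n)) = (\<Sum>i<k. x i *s w i) + (\<Sum>i<k. y i *s w i)"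
  by (simp add: vector_sadd_rdistrib sum.distrib)

lemma Lscale: "(\<Sum>i<(k::nat). (c * x i) *s (w i :: 'a::field^'n)) = c *s (\<Sum>i<k. x i *s w i)"
  by (simp add: vec.scale_sum_right vector_smult_assoc)

lemma Ldelta: "j < (k::nat) \<Longrightarrow> (\<Sum>i<k. (if i = j then c else 0) *s (w i :: 'a::field^'n)) = c *s w j"
  by (rule trans[OF Lsupp1]) auto

lemma sum_in_span: "(\<Sum>i\<in>A. l i *s (w i :: 'a::field^'n)) \<in> vec.span (w ` A)"
  by (intro vec.span_sum vec.span_scale vec.span_base) auto

lemma span_repr: assumes "finite A" "x \<in> vec.span (w ` A)"
  shows "\<exists>l. x = (\<Sum>i\<in>A. l i *s (w i :: 'a::field^'n))"
  using assms
proof (induction A arbitrary: x rule: finite_induct)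
  case empty then show ?case by simp
next
  case (insert m A)
  from insert.prems obtain c where c: "x - c *s w m \<in> vec.span (w ` A)"
    by (auto simp: vec.span_insert)
  obtain l where l: "x - c *s w m = (\<Sum>i\<in>A. l i *s w i)" using insert.IH[OF c] by blast
  have "x = (\<Sum>i\<in>insert m A. (l(m := c)) i *s w i)"
  proof -
    have "(\<Sum>i\<in>A. (l(m := c)) i *s w i) = (\<Sum>i\<in>A. l i *s w i)"
      using insert.hyps by (intro sum.cong) auto
    hence "(\<Sum>i\<in>insert m A. (l(m := c)) i *s w i) = c *s w m + (x - c *s w m)"
      using insert.hyps l by simp
    thus ?thesis by simp
  qed
  then show ?case by blast
qed

lemma chain_min: assumes "\<forall>i<k. \<forall>i'<k. A i \<subseteq> A i' \<or> A i' \<subseteq> A i" "0 < (k::nat)"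
  shows "\<exists>j<k. \<forall>i<k. A j \<subseteq> A i"
  using assms
proof (induction k)
  case 0 then show ?case by simp
next
  case (Suc n)
  show ?case
  proof (cases "n = 0")
    case True
    have "\<forall>i<Suc n. A 0 \<subseteq> A i"
    proof (intro allI impI)
      fix i assume "i < Suc n" thus "A 0 \<subseteq> A i" using True by simp
    qed
    then show ?thesis by blast
  next
    case False
    have pr: "\<forall>i<n. \<forall>i'<n. A i \<subseteq> A i' \<or> A i' \<subseteq> A i"
    proof (intro allI impI)
      fix i i' assume "i < n" "i' < n"
      thus "A i \<subseteq> A i' \<or> A i' \<subseteq> A i" using Suc.prems(1) less_SucI by blast
    qed
    obtain j where j: "j < n" "\<forall>i<n. A j \<subseteq> A i" using Suc.IH[OF pr] False by blast
    have cmp: "A j \<subseteq> A n \<or> A n \<subseteq> A j" using Suc.prems(1) j(1) less_SucI lessI by blast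
    show ?thesis
    proof (cases "A j \<subseteq> A n")
      case True
      have "\<forall>i<Suc n. A j \<subseteq> A i"
      proof (intro allI impI)
        fix i assume "i < Suc n"
        hence "i < n \<or> i = n" by (rule less_SucE) auto
        thus "A j \<subseteq> A i" using True j(2) by blast
      qed
      thus ?thesis using j(1) less_SucI by blast
    next
      case False
      hence nj: "A n \<subseteq> A j" using cmp by blast
      have "\<forall>i<Suc n. A n \<subseteq> A i"
      proof (intro allI impI)
        fix i assume "i < Suc n"
        hence "i < n \<or> i = n" by (rule less_SucE) auto
        thus "A n \<subseteq> A i" using nj j(2) by blast
      qed
      thus ?thesis by blast
    qed
  qed
qed

context vfield begin


definition ON :: "(nat \<Rightarrow> 'k^'n) \<Rightarrow> nat \<Rightarrow> bool" where
  "ON w k \<longleftrightarrow> (\<forall>l \<delta>. \<delta> \<le> vec_val \<nu> (\<Sum>i<k. l i *s w i) \<longleftrightarrow> (\<forall>i<k. \<delta> \<le> \<nu> (l i)))"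

lemma on_iff: assumes "ON w k" shows "(\<delta> \<le> vec_val \<nu> (\<Sum>i<k. l i *s w i)) = (\<forall>i<k. \<delta> \<le> \<nu> (l i))"
  using assms unfolding ON_def
  apply (erule_tac x=l in allE)
  apply (erule_tac x=\<delta> in allE)
  by assumption

lemma on_coef: assumes "ON w k" "i < k" shows "vec_val \<nu> (\<Sum>i<k. l i *s w i) \<le> \<nu> (l i)"
proof -
  have "\<forall>i<k. vec_val \<nu> (\<Sum>i<k. l i *s w i) \<le> \<nu> (l i)"
    using on_iff[OF assms(1), of "vec_val \<nu> (\<Sum>i<k. l i *s w i)" l] by blast
  thus ?thesis using assms(2) by blast
qed

lemma on_val_w: assumes "ON w k" "j < k" shows "vec_val \<nu> (w j) = Fin 0"
proof -
  define l where "l i = (if i = j then (1::'k) else 0)" for i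
  have s: "(\<Sum>i<k. l i *s w i) = w j" unfolding l_def using Ldelta[OF assms(2), of 1 w] by (metis vector_smult_lid)
  have dd: "\<And>\<delta>. \<delta> \<le> vec_val \<nu> (w j) \<longleftrightarrow> \<delta> \<le> Fin 0"
  proof -
    fix \<delta>
    have "\<delta> \<le> vec_val \<nu> (w j) \<longleftrightarrow> (\<forall>i<k. \<delta> \<le> \<nu> (l i))" using on_iff[OF assms(1), of \<delta> l] s by simp
    also have "\<dots> \<longleftrightarrow> \<delta> \<le> Fin 0"
    proof
      assume "\<forall>i<k. \<delta> \<le> \<nu> (l i)"
      hence "\<delta> \<le> \<nu> (l j)" using assms(2) by blast
      thus "\<delta> \<le> Fin 0" unfolding l_def by simp
    next
      assume d: "\<delta> \<le> Fin 0"
      show "\<forall>i<k. \<delta> \<le> \<nu> (l i)"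
      proof (intro allI impI)
        fix i assume "i < k"
        show "\<delta> \<le> \<nu> (l i)" using d unfolding l_def by (cases "i = j") simp_all
      qed
    qed
    finally show "\<delta> \<le> vec_val \<nu> (w j) \<longleftrightarrow> \<delta> \<le> Fin 0" .
  qed
  have "vec_val \<nu> (w j) \<le> Fin 0" using dd[of "vec_val \<nu> (w j)"] by simp
  moreover have "Fin 0 \<le> vec_val \<nu> (w j)" using dd[of "Fin 0"] by simp
  ultimately
  show ?thesis by (rule antisym)
qed

lemma on_unique: assumes "ON w k" "(\<Sum>i<k. l i *s w i) = (\<Sum>i<k. l' i *s w i)" "i < k"
  shows "l i = l' i"
proof -
  have z: "(\<Sum>i<k. (l i - l' i) *s w i) = 0" unfolding Ldiff assms(2) by (rule diff_self)
  have "Infty \<le> vec_val \<nu> (\<Sum>i<k. (l i - l' i) *s w i)" unfolding z val_zero by (rule order_refl)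
  hence "\<forall>i<k. Infty \<le> \<nu> (l i - l' i)" by (rule iffD1[OF on_iff[OF assms(1)]])
  hence "Infty \<le> \<nu> (l i - l' i)" using assms(3) by blast
  hence "\<nu> (l i - l' i) = Infty" by (rule antisym[OF extv_le_Infty])
  hence "l i - l' i = 0" using nu_Infty_iff by blast
  thus ?thesis by simp
qed

end

context vfield begin
lemma orth:
  fixes u x :: "'k^'n"
  assumes u0: "vec_val \<nu> u = Fin 0" and up: "u $ p = 1" and xp: "x $ p = 0"
  shows "\<delta> \<le> vec_val \<nu> (c *s u + x) \<longleftrightarrow> \<delta> \<le> \<nu> c \<and> \<delta> \<le> vec_val \<nu> x"
proof -
  have cu: "vec_val \<nu> (c *s u) = \<nu> c" unfolding val_scale u0 by (rule ext_add_Fin0(2))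
  have cp: "(c *s u + x) $ p = c" using up xp by simp
  show ?thesis
  proof
    assume d: "\<delta> \<le> vec_val \<nu> (c *s u + x)"
    have "vec_val \<nu> (c *s u + x) \<le> \<nu> c" using val_le[of "c *s u + x" p] unfolding cp .
    hence c: "\<delta> \<le> \<nu> c" using d by (rule order_trans[rotated])
    have "min (vec_val \<nu> (c *s u + x)) (vec_val \<nu> (c *s u)) \<le> vec_val \<nu> ((c *s u + x) - c *s u)"
      by (rule val_diff)
    hence "min (vec_val \<nu> (c *s u + x)) (\<nu> c) \<le> vec_val \<nu> x" unfolding cu by simp
    moreover have "\<delta> \<le> min (vec_val \<nu> (c *s u + x)) (\<nu> c)" using c d by (rule min.boundedI[rotated])
    ultimately have "\<delta> \<le> vec_val \<nu> x" by (rule order_trans[rotated])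
    thus "\<delta> \<le> \<nu> c \<and> \<delta> \<le> vec_val \<nu> x" using c by blast
  next
    assume d: "\<delta> \<le> \<nu> c \<and> \<delta> \<le> vec_val \<nu> x"
    have "min (vec_val \<nu> (c *s u)) (vec_val \<nu> x) \<le> vec_val \<nu> (c *s u + x)" by (rule val_add)
    hence m: "min (\<nu> c) (vec_val \<nu> x) \<le> vec_val \<nu> (c *s u + x)" unfolding cu .
    have "\<delta> \<le> min (\<nu> c) (vec_val \<nu> x)" using d by simp
    thus "\<delta> \<le> vec_val \<nu> (c *s u + x)" using m by (rule order_trans)
  qed
qed

end

context vfield begin
lemma on_exists:
  fixes V :: "('k^'n) set"
  assumes "vec.subspace V"
  shows "\<exists>k w. ON w k \<and> vec.span (w ` {..<k}) = V"
  using assms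
proof (induction "vec.dim V" arbitrary: V rule: less_induct)
  case less
  show ?case
  proof (cases "V \<subseteq> {0}")
    case True
    hence V0: "V = {0}" using vec.subspace_0[OF less.prems] by blast
    have "ON (\<lambda>_. 0) 0" unfolding ON_def by simp
    then show ?thesis using V0 by (intro exI[of _ 0] exI[of _ "\<lambda>_. 0"]) simp
  next
    case False
    then obtain v where v: "v \<in> V" "v \<noteq> 0" by blast
    obtain p where p: "vec_val \<nu> v = \<nu> (v $ p)" using val_attained by blast
    have vp: "v $ p \<noteq> 0" using p v(2) val_Infty_iff nu_Infty_iff by metis
    define u where "u = inverse (v $ p) *s v"
    have uV: "u \<in> V" unfolding u_def using vec.subspace_scale[OF less.prems v(1)] .
    have up: "u $ p = 1" unfolding u_def using vp by simp
    have u0: "vec_val \<nu> u = Fin 0" unfolding u_def val_scale p using nu_inverse[OF vp] .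
    define V' where "V' = {x \<in> V. x $ p = 0}"
    have sV': "vec.subspace V'" unfolding V'_def
    proof (rule vec.subspaceI)
      show "0 \<in> {x \<in> V. x $ p = 0}" using vec.subspace_0[OF less.prems] by simp
      fix x y assume "x \<in> {x \<in> V. x $ p = 0}" "y \<in> {x \<in> V. x $ p = 0}"
      thus "x + y \<in> {x \<in> V. x $ p = 0}" using vec.subspace_add[OF less.prems] by simp
    next
      fix c x assume "x \<in> {x \<in> V. x $ p = 0}"
      thus "c *s x \<in> {x \<in> V. x $ p = 0}" using vec.subspace_scale[OF less.prems] by simp
    qed
    have V'V: "V' \<subset> V"
    proof -
      have "V' \<subseteq> V" unfolding V'_def by blast
      moreover have "u \<notin> V'" unfolding V'_def using up by simp
      ultimately show ?thesis using uV by blast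
    qed
    have "vec.dim V' < vec.dim V"
      using vec.dim_psubset[of V' V] V'V
      unfolding vec.span_eq_iff[THEN iffD2, OF sV'] vec.span_eq_iff[THEN iffD2, OF less.prems] by blast
    then obtain k' w' where on': "ON w' k'" and sp': "vec.span (w' ` {..<k'}) = V'"
      using less.hyps sV' by blast
    define w where "w = case_nat u w'"
    have sumsplit: "(\<Sum>i<Suc k'. l i *s w i) = l 0 *s u + (\<Sum>i<k'. l (Suc i) *s w' i)" for l
      unfolding w_def sum.lessThan_Suc_shift by simp
    have inV': "(\<Sum>i<k'. l i *s w' i) \<in> V'" for l
      using sum_in_span[where A="{..<k'}" and l=l and w=w'] sp' by simp
    have on: "ON w (Suc k')"
      unfolding ON_def
    proof (intro allI)
      fix l and \<delta> :: "'g extv"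
      have xp: "(\<Sum>i<k'. l (Suc i) *s w' i) $ p = 0" using inV'[of "\<lambda>i. l (Suc i)"] unfolding V'_def by blast
      have "\<delta> \<le> vec_val \<nu> (\<Sum>i<Suc k'. l i *s w i) \<longleftrightarrow>
            \<delta> \<le> \<nu> (l 0) \<and> \<delta> \<le> vec_val \<nu> (\<Sum>i<k'. l (Suc i) *s w' i)"
        unfolding sumsplit using orth[OF u0 up xp] .
      also have "\<dots> \<longleftrightarrow> \<delta> \<le> \<nu> (l 0) \<and> (\<forall>i<k'. \<delta> \<le> \<nu> (l (Suc i)))"
        using on_iff[OF on', of \<delta> "\<lambda>i. l (Suc i)"] by (rule arg_cong)
      also have "\<dots> \<longleftrightarrow> (\<forall>i<Suc k'. \<delta> \<le> \<nu> (l i))"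
        by (simp only: All_less_Suc2)
      finally show "\<delta> \<le> vec_val \<nu> (\<Sum>i<Suc k'. l i *s w i) \<longleftrightarrow> (\<forall>i<Suc k'. \<delta> \<le> \<nu> (l i))" .
    qed
    have img: "w ` {..<Suc k'} = insert u (w' ` {..<k'})"
      unfolding lessThan_Suc_eq_insert_0 image_insert image_image w_def by simp
    have "vec.span (w ` {..<Suc k'}) = V"
    proof -
      have "vec.span (w ` {..<Suc k'}) = {x. \<exists>c. x - c *s u \<in> V'}"
        unfolding img vec.span_insert sp' ..
      also have "\<dots> = V"
      proof (intro equalityI subsetI)
        fix x assume "x \<in> {x. \<exists>c. x - c *s u \<in> V'}"
        then obtain c where "x - c *s u \<in> V" unfolding V'_def by blast
        hence "(x - c *s u) + c *s u \<in> V" using vec.subspace_add[OF less.prems _ vec.subspace_scale[OF less.prems uV]] by blast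
        thus "x \<in> V" by simp
      next
        fix x assume x: "x \<in> V"
        have "x - (x $ p) *s u \<in> V'" unfolding V'_def
          using vec.subspace_diff[OF less.prems x vec.subspace_scale[OF less.prems uV]] up by simp
        thus "x \<in> {x. \<exists>c. x - c *s u \<in> V'}" by blast
      qed
      finally show ?thesis .
    qed
    then show ?thesis using on by blast
  qed
qed

end

lemma scal_delta: "j < (k::nat) \<Longrightarrow> (\<Sum>i<k. (if i = j then c else 0) * (a i :: 'a::field)) = c * a j"
proof -
  assume j: "j < k"
  have "(\<Sum>i<k. (if i = j then c else 0) * a i) = (\<Sum>i\<in>{j}. (if i = j then c else 0) * a i)"
    using j by (intro sum.mono_neutral_right) auto
  thus ?thesis by simp
qed

lemma uc_Infty: "upwards_closed \<Delta> \<Longrightarrow> \<Delta> \<noteq> {} \<Longrightarrow> Infty \<in> \<Delta>"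
  unfolding upwards_closed_def using extv_le_Infty by blast

context vfield begin

lemma core:
  fixes V :: "('k^'n) set"
  assumes sc: "spherically_complete \<nu>" and sV: "vec.subspace V" and dV: "vec.dim V = Suc m"
    and CV: "C \<subseteq> V" and CO: "is_O_submodule \<nu> C"
  shows "\<exists>H \<Delta>0. vec.subspace H \<and> vec.dim H = m \<and> H \<subset> V \<and> \<Delta>0 \<noteq> {} \<and> upwards_closed \<Delta>0 \<and>
           (\<forall>v\<in>V. vec_val \<nu> v \<in> \<Delta>0 \<longrightarrow> v \<in> C) \<and>
           (\<forall>c\<in>C. \<exists>h b. h \<in> C \<and> h \<in> H \<and> b \<in> V \<and> vec_val \<nu> b \<in> \<Delta>0 \<and> c = h + b)"
proof -
  obtain k w where on: "ON w k" and sp: "vec.span (w ` {..<k}) = V" using on_exists[OF sV] by blast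
  have k0: "0 < k"
  proof (rule ccontr)
    assume "\<not> 0 < k"
    hence "k = 0" by simp
    hence "V = {0}" using sp by simp
    hence "vec.dim V = 0" by simp
    thus False using dV by simp
  qed
  have wV: "w i \<in> V" if "i < k" for i
    using that sp vec.span_base[of "w i" "w ` {..<k}"] by blast
  have LV: "(\<Sum>i<k. l i *s w i) \<in> V" for l
    using sum_in_span[where A="{..<k}" and l=l and w=w] sp by simp
  have repr: "\<exists>l. v = (\<Sum>i<k. l i *s w i)" if "v \<in> V" for v
    using span_repr[of "{..<k}" v w] sp that by simp
  define Ds where "Ds i = {x. x *s w i \<in> C}" for i
  have kD: "kmod \<nu> (Ds i)" for i unfolding Ds_def by (rule kmod_line[OF CO])
  have chn: "\<forall>i<k. \<forall>i'<k. Ds i \<subseteq> Ds i' \<or> Ds i' \<subseteq> Ds i" using kmod_chain[OF kD kD] by blast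
  obtain j where j: "j < k" "\<forall>i<k. Ds j \<subseteq> Ds i" using chain_min[OF chn k0] by blast
  define D where "D = Ds j"
  have kDD: "kmod \<nu> D" unfolding D_def by (rule kD)
  define \<Delta>0 where "\<Delta>0 = \<nu> ` D"
  have memD: "x \<in> D \<longleftrightarrow> \<nu> x \<in> \<Delta>0" for x
  proof
    assume "\<nu> x \<in> \<Delta>0"
    then obtain y where y: "y \<in> D" "\<nu> y = \<nu> x" unfolding \<Delta>0_def by (metis image_iff)
    show "x \<in> D" using kmod_up[OF kDD y(1)] y(2) by simp
  qed (simp add: \<Delta>0_def)
  have up: "upwards_closed \<Delta>0"
    unfolding upwards_closed_def
  proof (intro ballI allI impI)
    fix \<gamma> \<delta> assume g: "\<gamma> \<in> \<Delta>0" and gd: "\<gamma> \<le> \<delta>"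
    obtain y where y: "y \<in> D" "\<nu> y = \<gamma>" using g unfolding \<Delta>0_def by (metis image_iff)
    have "\<exists>z. \<nu> z = \<delta>"
    proof (cases \<delta>)
      case (Fin g) then show ?thesis using nu_surj by simp
    next
      case Infty then show ?thesis using nu_zero by blast
    qed
    then obtain z where z: "\<nu> z = \<delta>" by blast
    have le: "\<nu> y \<le> \<nu> z" unfolding y(2) z by (rule gd)
    have "z \<in> D" by (rule kmod_up[OF kDD y(1) le])
    thus "\<delta> \<in> \<Delta>0" unfolding \<Delta>0_def z[symmetric] by (rule imageI)
  qed
  have ne: "\<Delta>0 \<noteq> {}" unfolding \<Delta>0_def using kmod_zero[OF kDD] by blast
  have ball: "\<forall>v\<in>V. vec_val \<nu> v \<in> \<Delta>0 \<longrightarrow> v \<in> C"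
  proof (intro ballI impI)
    fix v assume v: "v \<in> V" and vd: "vec_val \<nu> v \<in> \<Delta>0"
    obtain l where l: "v = (\<Sum>i<k. l i *s w i)" using repr[OF v] by blast
    have tc: "l i *s w i \<in> C" if i: "i < k" for i
    proof -
      have "vec_val \<nu> v \<le> \<nu> (l i)" unfolding l by (rule on_coef[OF on i])
      hence "\<nu> (l i) \<in> \<Delta>0" by (rule up[unfolded upwards_closed_def, rule_format, OF vd])
      hence "l i \<in> D" using memD by blast
      hence "l i \<in> Ds i" using j(2) i unfolding D_def by blast
      thus ?thesis unfolding Ds_def by simp
    qed
    show "v \<in> C" unfolding l using tc by (intro om_sum[OF CO]) simp
  qed
  have base: "\<forall>x. x *s w j \<in> C \<longrightarrow> x \<in> Ds j" unfolding Ds_def by simp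
  obtain a where a1: "a j = 1" and ha0: "\<forall>l. (\<Sum>i<k. l i *s w i) \<in> C \<longrightarrow> (\<forall>i<k. i \<notin> insert j ({..<k} - {j}) \<longrightarrow> l i = 0)
            \<longrightarrow> (\<Sum>i\<in>insert j ({..<k} - {j}). l i * a i) \<in> Ds j"
    using hb[where w=w and k=k and j=j and C=C and D="Ds j" and J'="{..<k} - {j}",
        OF sc CO kD j(1) base finite_Diff[OF finite_lessThan] Diff_subset] by blast
  have ins: "insert j ({..<k} - {j}) = {..<k}" using j(1) by auto
  have haC: "(\<Sum>i<k. l i * a i) \<in> D" if "(\<Sum>i<k. l i *s w i) \<in> C" for l
    using ha0 that unfolding ins D_def by blast
  define H where "H = {(\<Sum>i<k. l i *s w i) | l. (\<Sum>i<k. l i * a i) = 0}"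
  have Hmem: "x \<in> H" if "x = (\<Sum>i<k. l i *s w i)" "(\<Sum>i<k. l i * a i) = 0" for x l
    unfolding H_def using that by blast
  have sH: "vec.subspace H"
  proof (rule vec.subspaceI)
    show "0 \<in> H" unfolding H_def mem_Collect_eq by (intro exI[of _ "\<lambda>_. 0"]) simp
  next
    fix x y assume "x \<in> H" "y \<in> H"
    then obtain l1 l2 where l1: "x = (\<Sum>i<k. l1 i *s w i)" "(\<Sum>i<k. l1 i * a i) = 0"
      and l2: "y = (\<Sum>i<k. l2 i *s w i)" "(\<Sum>i<k. l2 i * a i) = 0" unfolding H_def by blast
    have "x + y = (\<Sum>i<k. (l1 i + l2 i) *s w i)" unfolding Ladd l1 l2 ..
    moreover have "(\<Sum>i<k. (l1 i + l2 i) * a i) = 0" using l1(2) l2(2) by (simp add: distrib_right sum.distrib)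
    ultimately show "x + y \<in> H" by (rule Hmem)
  next
    fix c x assume "x \<in> H"
    then obtain l1 where l1: "x = (\<Sum>i<k. l1 i *s w i)" "(\<Sum>i<k. l1 i * a i) = 0" unfolding H_def by blast
    have "c *s x = (\<Sum>i<k. (c * l1 i) *s w i)" unfolding Lscale l1 ..
    moreover have "(\<Sum>i<k. (c * l1 i) * a i) = 0" using l1(2) by (simp add: mult.assoc sum_distrib_left[symmetric])
    ultimately show "c *s x \<in> H" by (rule Hmem)
  qed
  have HV: "H \<subseteq> V" unfolding H_def using LV by blast
  have dec: "(\<Sum>i<k. l i *s w i) - (\<Sum>i<k. l i * a i) *s w j \<in> H" for l
  proof -
    define s where "s = (\<Sum>i<k. l i * a i)"
    define l' where "l' i = l i - (if i = j then s else 0)" for i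
    have "(\<Sum>i<k. l' i *s w i) = (\<Sum>i<k. l i *s w i) - (\<Sum>i<k. (if i = j then s else 0) *s w i)"
      unfolding l'_def by (rule Ldiff)
    also have "\<dots> = (\<Sum>i<k. l i *s w i) - s *s w j" unfolding Ldelta[OF j(1)] ..
    finally have e1: "(\<Sum>i<k. l' i *s w i) = (\<Sum>i<k. l i *s w i) - s *s w j" .
    have "(\<Sum>i<k. l' i * a i) = (\<Sum>i<k. l i * a i - (if i = j then s else 0) * a i)"
      unfolding l'_def by (simp add: left_diff_distrib)
    also have "\<dots> = s - s * a j" unfolding sum_subtractf scal_delta[OF j(1)] s_def ..
    also have "\<dots> = 0" using a1 by simp
    finally have "(\<Sum>i<k. l' i * a i) = 0" .
    thus ?thesis unfolding s_def[symmetric] e1[symmetric] by (rule Hmem[OF refl])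
  qed
  have wjH: "w j \<notin> H"
  proof
    assume "w j \<in> H"
    then obtain l where l: "w j = (\<Sum>i<k. l i *s w i)" "(\<Sum>i<k. l i * a i) = 0" unfolding H_def by blast
    define e where "e i = (if i = j then (1::'k) else 0)" for i
    have "(\<Sum>i<k. e i *s w i) = 1 *s w j" unfolding e_def by (rule Ldelta[OF j(1)])
    hence "(\<Sum>i<k. e i *s w i) = (\<Sum>i<k. l i *s w i)" using l(1) by simp
    hence "\<forall>i<k. e i = l i" using on_unique[OF on] by blast
    hence "(\<Sum>i<k. l i * a i) = (\<Sum>i<k. e i * a i)" by simp
    also have "\<dots> = 1 * a j" unfolding e_def by (rule scal_delta[OF j(1)])
    finally show False using l(2) a1 by simp
  qed
  have spanV: "vec.span (insert (w j) H) = V"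
  proof (rule equalityI)
    show "vec.span (insert (w j) H) \<subseteq> V"
      using vec.span_minimal[of "insert (w j) H" V] HV wV[OF j(1)] sV by blast
  next
    show "V \<subseteq> vec.span (insert (w j) H)"
    proof
      fix x assume "x \<in> V"
      then obtain l where l: "x = (\<Sum>i<k. l i *s w i)" using repr by blast
      have "x - (\<Sum>i<k. l i * a i) *s w j \<in> vec.span H" using dec[of l] l vec.span_base by blast
      thus "x \<in> vec.span (insert (w j) H)" unfolding vec.span_insert by blast
    qed
  qed
  have "vec.dim V = vec.dim (insert (w j) H)" using spanV vec.dim_span by metis
  also have "\<dots> = vec.dim H + 1"
  proof -
    have spH: "vec.span H = H" by (rule vec.span_eq_iff[THEN iffD2, OF sH])
    show ?thesis unfolding vec.dim_insert spH using wjH by simp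
  qed
  finally have dH: "vec.dim H = m" using dV by simp
  have HsV: "H \<subset> V" using HV wjH wV[OF j(1)] by blast
  have decomp: "\<forall>c\<in>C. \<exists>h b. h \<in> C \<and> h \<in> H \<and> b \<in> V \<and> vec_val \<nu> b \<in> \<Delta>0 \<and> c = h + b"
  proof
    fix c assume c: "c \<in> C"
    then obtain l where l: "c = (\<Sum>i<k. l i *s w i)" using repr CV by blast
    define s where "s = (\<Sum>i<k. l i * a i)"
    have sD: "s \<in> D" unfolding s_def using haC c l by blast
    have bC: "s *s w j \<in> C" using sD unfolding D_def Ds_def by simp
    have bV: "s *s w j \<in> V" using vec.subspace_scale[OF sV wV[OF j(1)]] .
    have "vec_val \<nu> (s *s w j) = \<nu> s" unfolding val_scale on_val_w[OF on j(1)] by (rule ext_add_Fin0(2))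
    hence bd: "vec_val \<nu> (s *s w j) \<in> \<Delta>0" using sD memD by simp
    have hH: "c - s *s w j \<in> H" using dec[of l] unfolding l s_def .
    have hC: "c - s *s w j \<in> C" using om_diff[OF CO c bC] .
    show "\<exists>h b. h \<in> C \<and> h \<in> H \<and> b \<in> V \<and> vec_val \<nu> b \<in> \<Delta>0 \<and> c = h + b"
      using hH hC bV bd by (intro exI[of _ "c - s *s w j"] exI[of _ "s *s w j"]) simp
  qed
  show ?thesis using sH dH HsV ne up ball decomp by blast
qed

end

context vfield begin

lemma om_inter: assumes CO: "is_O_submodule \<nu> C" and sH: "vec.subspace H"
  shows "is_O_submodule \<nu> (C \<inter> H)"
  unfolding is_O_submodule_def
  using om_zero[OF CO] om_add[OF CO] om_scale[OF CO] vec.subspace_0[OF sH] vec.subspace_add[OF sH]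
    vec.subspace_scale[OF sH] unfolding val_ring_def by blast

lemma uc_union: "upwards_closed A \<Longrightarrow> upwards_closed B \<Longrightarrow> upwards_closed (A \<union> B)"
  unfolding upwards_closed_def by blast

lemma main:
  fixes V :: "('k^'n) set"
  assumes sc: "spherically_complete \<nu>"
  shows "vec.subspace V \<Longrightarrow> vec.dim V = m \<Longrightarrow> C \<subseteq> V \<Longrightarrow> is_O_submodule \<nu> C \<Longrightarrow>
    \<exists>(F :: nat \<Rightarrow> ('k ^ 'n) set) (\<Delta> :: nat \<Rightarrow> 'g extv set).
           (\<forall>i\<in>{1..m}. vec.subspace (F i) \<and> vec.dim (F i) = i \<and> F i \<subseteq> V) \<and>
           (\<forall>i\<in>{1..<m}. F i \<subset> F (Suc i)) \<and>
           F m = V \<and>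
           (\<forall>i\<in>{1..m}. \<Delta> i \<noteq> {} \<and> upwards_closed (\<Delta> i)) \<and>
           (\<forall>i\<in>{1..<m}. \<Delta> (Suc i) \<subseteq> \<Delta> i) \<and>
           C = {(\<Sum>i\<in>{1..m}. v i) | v :: nat \<Rightarrow> 'k ^ 'n.
                  \<forall>i\<in>{1..m}. v i \<in> F i \<and> vec_val \<nu> (v i) \<in> \<Delta> i}"
proof (induction m arbitrary: V C)
  case 0
  have V0: "V = {0}" using 0 vec.subspace_0[OF 0(1)] by auto
  have C0: "C = {0}" using 0(3) om_zero[OF 0(4)] V0 by blast
  show ?case
    by (intro exI[of _ "\<lambda>_. V"] exI[of _ "\<lambda>_. UNIV"]) (simp add: C0)
next
  case (Suc m)
  obtain H \<Delta>0 where sH: "vec.subspace H" and dH: "vec.dim H = m" and HV: "H \<subset> V"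
    and ne0: "\<Delta>0 \<noteq> {}" and uc0: "upwards_closed \<Delta>0"
    and ball: "\<forall>v\<in>V. vec_val \<nu> v \<in> \<Delta>0 \<longrightarrow> v \<in> C"
    and decomp: "\<forall>c\<in>C. \<exists>h b. h \<in> C \<and> h \<in> H \<and> b \<in> V \<and> vec_val \<nu> b \<in> \<Delta>0 \<and> c = h + b"
    using core[OF sc Suc.prems(1,2,3,4)] by blast
  have CH: "C \<inter> H \<subseteq> H" by blast
  obtain F' \<Delta>' where
        F'1: "\<forall>i\<in>{1..m}. vec.subspace (F' i) \<and> vec.dim (F' i) = i \<and> F' i \<subseteq> H"
    and F'2: "\<forall>i\<in>{1..<m}. F' i \<subset> F' (Suc i)"
    and F'3: "F' m = H"
    and D'1: "\<forall>i\<in>{1..m}. \<Delta>' i \<noteq> {} \<and> upwards_closed (\<Delta>' i)"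
    and D'2: "\<forall>i\<in>{1..<m}. \<Delta>' (Suc i) \<subseteq> \<Delta>' i"
    and CHeq: "C \<inter> H = {(\<Sum>i\<in>{1..m}. v i) | v :: nat \<Rightarrow> 'k ^ 'n.
                  \<forall>i\<in>{1..m}. v i \<in> F' i \<and> vec_val \<nu> (v i) \<in> \<Delta>' i}"
    using Suc.IH[OF sH dH CH om_inter[OF Suc.prems(4) sH]] by blast
  define F where "F i = (if i \<le> m then F' i else V)" for i
  define \<Delta> where "\<Delta> i = (if i \<le> m then \<Delta>' i \<union> \<Delta>0 else \<Delta>0)" for i
  have P1: "\<forall>i\<in>{1..Suc m}. vec.subspace (F i) \<and> vec.dim (F i) = i \<and> F i \<subseteq> V"
  proof
    fix i assume i: "i \<in> {1..Suc m}"
    show "vec.subspace (F i) \<and> vec.dim (F i) = i \<and> F i \<subseteq> V"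
    proof (cases "i \<le> m")
      case True
      hence "i \<in> {1..m}" using i by simp
      hence "vec.subspace (F' i) \<and> vec.dim (F' i) = i \<and> F' i \<subseteq> H" using F'1 by blast
      then show ?thesis using HV True unfolding F_def by auto
    next
      case False
      hence "i = Suc m" using i by simp
      then show ?thesis using False Suc.prems(1,2) unfolding F_def by simp
    qed
  qed
  have P2: "\<forall>i\<in>{1..<Suc m}. F i \<subset> F (Suc i)"
  proof
    fix i assume i: "i \<in> {1..<Suc m}"
    show "F i \<subset> F (Suc i)"
    proof (cases "Suc i \<le> m")
      case True
      hence "i \<in> {1..<m}" using i by simp
      hence "F' i \<subset> F' (Suc i)" using F'2 by blast
      then show ?thesis using True unfolding F_def by simp
    next
      case False
      hence "i = m" using i by simp
      then show ?thesis using F'3 HV unfolding F_def by simp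
    qed
  qed
  have P3: "F (Suc m) = V" unfolding F_def by simp
  have P4: "\<forall>i\<in>{1..Suc m}. \<Delta> i \<noteq> {} \<and> upwards_closed (\<Delta> i)"
  proof
    fix i assume i: "i \<in> {1..Suc m}"
    show "\<Delta> i \<noteq> {} \<and> upwards_closed (\<Delta> i)"
    proof (cases "i \<le> m")
      case True
      hence "i \<in> {1..m}" using i by simp
      hence "\<Delta>' i \<noteq> {} \<and> upwards_closed (\<Delta>' i)" using D'1 by blast
      then show ?thesis using uc_union[OF _ uc0] True unfolding \<Delta>_def by auto
    next
      case False
      then show ?thesis using ne0 uc0 unfolding \<Delta>_def by simp
    qed
  qed
  have P5: "\<forall>i\<in>{1..<Suc m}. \<Delta> (Suc i) \<subseteq> \<Delta> i"
  proof
    fix i assume i: "i \<in> {1..<Suc m}"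
    show "\<Delta> (Suc i) \<subseteq> \<Delta> i"
    proof (cases "Suc i \<le> m")
      case True
      hence "i \<in> {1..<m}" using i by simp
      hence "\<Delta>' (Suc i) \<subseteq> \<Delta>' i" using D'2 by blast
      then show ?thesis using True unfolding \<Delta>_def by auto
    next
      case False
      hence "i = m" using i by simp
      then show ?thesis unfolding \<Delta>_def by auto
    qed
  qed
  have P6: "C = {(\<Sum>i\<in>{1..Suc m}. v i) | v :: nat \<Rightarrow> 'k ^ 'n.
                  \<forall>i\<in>{1..Suc m}. v i \<in> F i \<and> vec_val \<nu> (v i) \<in> \<Delta> i}"
  proof (intro equalityI subsetI)
    fix c assume c: "c \<in> C"
    then obtain h b where hb: "h \<in> C" "h \<in> H" "b \<in> V" "vec_val \<nu> b \<in> \<Delta>0" "c = h + b"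
      using decomp by blast
    have "h \<in> C \<inter> H" using hb by blast
    then obtain v' where v': "h = (\<Sum>i\<in>{1..m}. v' i)" "\<forall>i\<in>{1..m}. v' i \<in> F' i \<and> vec_val \<nu> (v' i) \<in> \<Delta>' i"
      unfolding CHeq by blast
    define v where "v i = (if i \<le> m then v' i else b)" for i
    have "(\<Sum>i\<in>{1..Suc m}. v i) = (\<Sum>i\<in>{1..m}. v i) + v (Suc m)"
      by (simp add: sum.cl_ivl_Suc)
    also have "(\<Sum>i\<in>{1..m}. v i) = (\<Sum>i\<in>{1..m}. v' i)" unfolding v_def by (intro sum.cong) auto
    finally have sv: "(\<Sum>i\<in>{1..Suc m}. v i) = c" using hb(5) v'(1) unfolding v_def by simp
    have cond: "\<forall>i\<in>{1..Suc m}. v i \<in> F i \<and> vec_val \<nu> (v i) \<in> \<Delta> i"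
    proof
      fix i assume i: "i \<in> {1..Suc m}"
      show "v i \<in> F i \<and> vec_val \<nu> (v i) \<in> \<Delta> i"
      proof (cases "i \<le> m")
        case True
        hence "i \<in> {1..m}" using i by simp
        hence "v' i \<in> F' i \<and> vec_val \<nu> (v' i) \<in> \<Delta>' i" using v'(2) by blast
        then show ?thesis using True unfolding v_def F_def \<Delta>_def by auto
      next
        case False
        then show ?thesis using hb(3,4) unfolding v_def F_def \<Delta>_def by simp
      qed
    qed
    show "c \<in> {(\<Sum>i\<in>{1..Suc m}. v i) | v :: nat \<Rightarrow> 'k ^ 'n.
                  \<forall>i\<in>{1..Suc m}. v i \<in> F i \<and> vec_val \<nu> (v i) \<in> \<Delta> i}"
      using sv cond by blast
  next
    fix c assume "c \<in> {(\<Sum>i\<in>{1..Suc m}. v i) | v :: nat \<Rightarrow> 'k ^ 'n.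
                  \<forall>i\<in>{1..Suc m}. v i \<in> F i \<and> vec_val \<nu> (v i) \<in> \<Delta> i}"
    then obtain v where c: "c = (\<Sum>i\<in>{1..Suc m}. v i)"
      and v: "\<forall>i\<in>{1..Suc m}. v i \<in> F i \<and> vec_val \<nu> (v i) \<in> \<Delta> i" by blast
    have each: "v i \<in> C" if i: "i \<in> {1..Suc m}" for i
    proof -
    have vi0: "v i \<in> F i \<and> vec_val \<nu> (v i) \<in> \<Delta> i" using v i by blast
    show ?thesis
    proof (cases "i \<le> m")
      case False
      hence "i = Suc m" using i by simp
      hence "v i \<in> V" "vec_val \<nu> (v i) \<in> \<Delta>0" using vi0 unfolding F_def \<Delta>_def by auto
      then show ?thesis using ball by blast
    next
      case True
      hence im: "i \<in> {1..m}" using i by simp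
      have vi: "v i \<in> F' i" "vec_val \<nu> (v i) \<in> \<Delta>' i \<union> \<Delta>0" using vi0 True unfolding F_def \<Delta>_def by auto
      have "v i \<in> V" using vi(1) F'1 im HV by blast
      show ?thesis
      proof (cases "vec_val \<nu> (v i) \<in> \<Delta>0")
        case True
        then show ?thesis using ball \<open>v i \<in> V\<close> by blast
      next
        case False
        hence vd: "vec_val \<nu> (v i) \<in> \<Delta>' i" using vi(2) by blast
        define u where "u l = (if l = i then v i else 0)" for l
        have su: "(\<Sum>l\<in>{1..m}. u l) = v i" unfolding u_def using im by simp
        have ucond: "\<forall>l\<in>{1..m}. u l \<in> F' l \<and> vec_val \<nu> (u l) \<in> \<Delta>' l"
        proof
          fix l assume l: "l \<in> {1..m}"
          show "u l \<in> F' l \<and> vec_val \<nu> (u l) \<in> \<Delta>' l"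
          proof (cases "l = i")
            case True then show ?thesis using vi(1) vd unfolding u_def by simp
          next
            case False
            have "0 \<in> F' l" using F'1 l vec.subspace_0 by blast
            moreover have "Infty \<in> \<Delta>' l" using D'1 l uc_Infty by blast
            ultimately show ?thesis using False unfolding u_def by simp
          qed
        qed
        have "v i \<in> C \<inter> H" unfolding CHeq
          by (rule CollectI, rule exI[of _ u], rule conjI[OF su[symmetric] ucond])
        then show ?thesis by blast
      qed
    qed
    qed
    show "c \<in> C" unfolding c using each by (intro om_sum[OF Suc.prems(4)]) simp
  qed
  show ?case using P1 P2 P3 P4 P5 P6 by blast
qed

end

theorem theorem3p6:
  fixes \<nu> :: "'k::field \<Rightarrow> 'g::linordered_ab_group_add extv"
    and C :: "('k ^ 'n) set"
  assumes "valuation \<nu>"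
    and "spherically_complete \<nu>"
    and "is_O_submodule \<nu> C"
  shows "\<exists>(F :: nat \<Rightarrow> ('k ^ 'n) set) (\<Delta> :: nat \<Rightarrow> 'g extv set).
           (\<forall>i\<in>{1..CARD('n)}. vec.subspace (F i) \<and> vec.dim (F i) = i) \<and>
           (\<forall>i\<in>{1..<CARD('n)}. F i \<subset> F (Suc i)) \<and>
           F (CARD('n)) = UNIV \<and>
           (\<forall>i\<in>{1..CARD('n)}. \<Delta> i \<noteq> {} \<and> upwards_closed (\<Delta> i)) \<and>
           (\<forall>i\<in>{1..<CARD('n)}. \<Delta> (Suc i) \<subseteq> \<Delta> i) \<and>
           C = {(\<Sum>i\<in>{1..CARD('n)}. v i) | v :: nat \<Rightarrow> 'k ^ 'n.
                  \<forall>i\<in>{1..CARD('n)}. v i \<in> F i \<and> vec_val \<nu> (v i) \<in> \<Delta> i}"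
proof -
  interpret vfield \<nu> by unfold_locales (rule assms(1))
  have "\<exists>(F :: nat \<Rightarrow> ('k ^ 'n) set) (\<Delta> :: nat \<Rightarrow> 'g extv set).
           (\<forall>i\<in>{1..CARD('n)}. vec.subspace (F i) \<and> vec.dim (F i) = i \<and> F i \<subseteq> UNIV) \<and>
           (\<forall>i\<in>{1..<CARD('n)}. F i \<subset> F (Suc i)) \<and>
           F (CARD('n)) = UNIV \<and>
           (\<forall>i\<in>{1..CARD('n)}. \<Delta> i \<noteq> {} \<and> upwards_closed (\<Delta> i)) \<and>
           (\<forall>i\<in>{1..<CARD('n)}. \<Delta> (Suc i) \<subseteq> \<Delta> i) \<and>
           C = {(\<Sum>i\<in>{1..CARD('n)}. v i) | v :: nat \<Rightarrow> 'k ^ 'n.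
                  \<forall>i\<in>{1..CARD('n)}. v i \<in> F i \<and> vec_val \<nu> (v i) \<in> \<Delta> i}"
    by (rule main[OF assms(2) vec.subspace_UNIV vec_dim_card subset_UNIV assms(3)])
  then show ?thesis by blast
qed

end
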